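(* Assume a capacity is given as in the context, satisfying: whenever $f=0$ $m$-a.e. and $t>0$, $p_tf=0$ except on a set of capacity $0$. Then every $m$-thin set has capacity $0$.
   Context: $(E,\mathcal B(E),m)$ is a $\sigma$-finite measure space. $p_t(x,\cdot)$, $t\ge0$, is a transition probability function on $E$ (probability measures, jointly measurable in $(t,x)$, $p_0(x,A)=1_A(x)$, with the semigroup property $p_{s+t}=p_sp_t$); $p_tf(x)=\int f\,dp_t(x,\cdot)$. $(T_t)$ is a strongly continuous semigroup on $L_2(m)$ with $p_tf$ representing $T_tf$ for bounded measurable square-integrable $f$. $Rf(x)=\int_0^\infty e^{-t}p_tf(x)\,dt$. A set $N\in\mathcal B(E)$ is $m$-thin if there exists $B\in\mathcal B(E)$ with $m(B)=0$ and $N\subset\{x:R1_B(x)>0\}$. A capacity here is a monotone set function on $\mathcal B(E)$ (e.g. that of the potential theory of the associated Markov process) such that a countable union of sets of capacity $0$ has capacity $0$. *)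

theory Defs
  imports "HOL-Analysis.Analysis"
begin

definition L2fun :: "'a measure \<Rightarrow> ('a \<Rightarrow> real) \<Rightarrow> bool" where
  "L2fun M f \<longleftrightarrow> f \<in> borel_measurable M \<and> integrable M (\<lambda>x. (f x)\<^sup>2)"

text \<open>A strongly continuous semigroup of bounded linear operators on L2(M), given
  on representatives (and compatible with a.e. equality, i.e. well defined on classes).\<close>
definition L2_sc_semigroup :: "'a measure \<Rightarrow> (real \<Rightarrow> ('a \<Rightarrow> real) \<Rightarrow> ('a \<Rightarrow> real)) \<Rightarrow> bool" where
  "L2_sc_semigroup M T \<longleftrightarrow>
     (\<forall>t\<ge>0. \<forall>f. L2fun M f \<longrightarrow> L2fun M (T t f)) \<and>
     (\<forall>t\<ge>0. \<forall>f g. L2fun M f \<longrightarrow> L2fun M g \<longrightarrow> (AE x in M. f x = g x)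
         \<longrightarrow> (AE x in M. T t f x = T t g x)) \<and>
     (\<forall>t\<ge>0. \<forall>f g a b. L2fun M f \<longrightarrow> L2fun M g \<longrightarrow>
         (AE x in M. T t (\<lambda>y. a * f y + b * g y) x = a * T t f x + b * T t g x)) \<and>
     (\<forall>t\<ge>0. \<exists>C. \<forall>f. L2fun M f \<longrightarrow>
         (\<integral>x. (T t f x)\<^sup>2 \<partial>M) \<le> C * (\<integral>x. (f x)\<^sup>2 \<partial>M)) \<and>
     (\<forall>f. L2fun M f \<longrightarrow> (AE x in M. T 0 f x = f x)) \<and>
     (\<forall>s\<ge>0. \<forall>t\<ge>0. \<forall>f. L2fun M f \<longrightarrow> (AE x in M. T (s + t) f x = T s (T t f) x)) \<and>
     (\<forall>f. L2fun M f \<longrightarrow> ((\<lambda>t. \<integral>x. (T t f x - f x)\<^sup>2 \<partial>M) \<longlongrightarrow> 0) (at_right 0))"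

definition transition_function :: "'a measure \<Rightarrow> (real \<Rightarrow> 'a \<Rightarrow> 'a measure) \<Rightarrow> bool" where
  "transition_function M p \<longleftrightarrow>
     (\<forall>t\<ge>0. \<forall>x\<in>space M. emeasure (p t x) (space (p t x)) = 1 \<and> sets (p t x) = sets M) \<and>
     (\<forall>A\<in>sets M. (\<lambda>(t, x). measure (p t x) A)
         \<in> borel_measurable (restrict_space lborel {0..} \<Otimes>\<^sub>M M)) \<and>
     (\<forall>x\<in>space M. \<forall>A\<in>sets M. measure (p 0 x) A = indicator A x) \<and>
     (\<forall>s\<ge>0. \<forall>t\<ge>0. \<forall>x\<in>space M. \<forall>A\<in>sets M.
         measure (p (s + t) x) A = (\<integral>y. measure (p t y) A \<partial>(p s x)))"

definition ptf :: "(real \<Rightarrow> 'a \<Rightarrow> 'a measure) \<Rightarrow> real \<Rightarrow> ('a \<Rightarrow> real) \<Rightarrow> 'a \<Rightarrow> real" where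
  "ptf p t f x = (\<integral>y. f y \<partial>(p t x))"

definition resolv :: "(real \<Rightarrow> 'a \<Rightarrow> 'a measure) \<Rightarrow> ('a \<Rightarrow> real) \<Rightarrow> 'a \<Rightarrow> real" where
  "resolv p f x = (LINT t:{0..}|lborel. exp (- t) * ptf p t f x)"

definition m_thin :: "'a measure \<Rightarrow> (real \<Rightarrow> 'a \<Rightarrow> 'a measure) \<Rightarrow> 'a set \<Rightarrow> bool" where
  "m_thin M p N \<longleftrightarrow> N \<in> sets M \<and>
     (\<exists>B\<in>sets M. emeasure M B = 0 \<and> N \<subseteq> {x \<in> space M. resolv p (indicator B) x > 0})"

definition capacity :: "'a measure \<Rightarrow> ('a set \<Rightarrow> ennreal) \<Rightarrow> bool" where
  "capacity M Cap \<longleftrightarrow>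
     (\<forall>A B. A \<in> sets M \<longrightarrow> B \<in> sets M \<longrightarrow> A \<subseteq> B \<longrightarrow> Cap A \<le> Cap B) \<and>
     (\<forall>A :: nat \<Rightarrow> 'a set. (\<forall>n. A n \<in> sets M \<and> Cap (A n) = 0) \<longrightarrow> Cap (\<Union>n. A n) = 0)"

end

theory Submission
  imports Defs "HOL-Probability.Probability_Measure"
begin

lemma AE_shift:
  fixes c :: real
  assumes "AE s in lborel. Q (c + s)" shows "AE t in lborel. Q t"
proof -
  from assms obtain Z where Z: "{s \<in> space lborel. \<not> Q (c+s)} \<subseteq> Z" "emeasure lborel Z = 0" "Z \<in> sets lborel"
    by (auto elim!: AE_E)
  have mZ: "(+) (-c) -` Z \<in> sets lborel"
    using measurable_sets[of "(+) (-c)" lborel lborel Z] Z(3) by simp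
  have "emeasure (distr lborel borel ((+) (-c))) Z = emeasure lborel ((+) (-c) -` Z \<inter> space lborel)"
    using Z(3) by (intro emeasure_distr) auto
  then have "emeasure lborel ((+) (-c) -` Z) = 0" using Z(2) by (simp add: lborel_distr_plus)
  then show ?thesis
    apply (intro AE_I'[of "(+) (-c) -` Z"])
    using mZ apply (simp add: null_sets_def)
    using Z(1) by force
qed

theorem lemma2p19:
  fixes M :: "'a measure" and p :: "real \<Rightarrow> 'a \<Rightarrow> 'a measure"
    and T :: "real \<Rightarrow> ('a \<Rightarrow> real) \<Rightarrow> ('a \<Rightarrow> real)"
    and Cap :: "'a set \<Rightarrow> ennreal"
  assumes "sigma_finite_measure M"
    and "transition_function M p"
    and "L2_sc_semigroup M T"
    and "\<forall>t\<ge>0. \<forall>f. f \<in> borel_measurable M \<longrightarrow> bounded (range f) \<longrightarrow> L2fun M f \<longrightarrow>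
           (AE x in M. ptf p t f x = T t f x)"
    and "capacity M Cap"
    and "\<forall>f t. f \<in> borel_measurable M \<longrightarrow> bounded (range f) \<longrightarrow> (AE x in M. f x = 0) \<longrightarrow> t > 0 \<longrightarrow>
           (\<exists>N\<in>sets M. Cap N = 0 \<and> (\<forall>x\<in>space M - N. ptf p t f x = 0))"
    and "m_thin M p N"
  shows "Cap N = 0"
proof -
  let ?L = "restrict_space lborel {0::real..}"
  have sfL: "sigma_finite_measure ?L"
    by (rule sigma_finite_measure_restrict_space) (auto simp: lborel.sigma_finite_measure_axioms)
  from assms(7) obtain B where NM: "N \<in> sets M" and B: "B \<in> sets M" "emeasure M B = 0"
    and Nsub: "N \<subseteq> {x \<in> space M. resolv p (indicator B) x > 0}"
    unfolding m_thin_def by blast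
  note tf = assms(2)[unfolded transition_function_def]
  have tf1: "prob_space (p t x) \<and> sets (p t x) = sets M" if "t \<ge> 0" "x \<in> space M" for t x
    using tf that by (auto intro: prob_spaceI)
  have sp: "space (p t x) = space M" if "t \<ge> 0" "x \<in> space M" for t x
    using tf1[OF that] sets_eq_imp_space_eq by blast
  have meas: "(\<lambda>(t,x). measure (p t x) A) \<in> borel_measurable (?L \<Otimes>\<^sub>M M)" if "A \<in> sets M" for A
    using tf that by blast
  have CK: "measure (p (s+t) x) A = (\<integral>y. measure (p t y) A \<partial>p s x)"
    if "s \<ge> 0" "t \<ge> 0" "x \<in> space M" "A \<in> sets M" for s t x A
    using tf that by blast
  define P where "P t x = measure (p t x) B" for t x
  have BsM: "B \<subseteq> space M" using B(1) sets.sets_into_space by blast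
  have ptfP: "ptf p t (indicator B) x = P t x" if "t \<ge> 0" "x \<in> space M" for t x
    unfolding ptf_def P_def using BsM by (simp add: integral_indicator sp[OF that] Int_absorb2)
  have S1: "AE x in M. P t x = 0" if t: "t \<ge> 0" for t
  proof -
    have L2B: "L2fun M (indicator B)"
    proof -
      have "(\<lambda>x. (indicator B x :: real)\<^sup>2) = indicator B" by (auto simp: indicator_def)
      then show ?thesis using B by (simp add: L2fun_def integrable_real_indicator)
    qed
    have L20: "L2fun M (\<lambda>_. 0)" unfolding L2fun_def by simp
    have bnd: "bounded (range (indicator B :: 'a \<Rightarrow> real))"
      by (rule finite_imp_bounded) (rule finite_subset[of _ "{0,1}"], auto simp: indicator_def)
    have a1: "AE x in M. ptf p t (indicator B) x = T t (indicator B) x"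
      using assms(4) t L2B bnd borel_measurable_indicator[OF B(1)] by blast
    have Bnull: "AE x in M. indicator B x = (0::real)"
      by (rule AE_I'[of B]) (use B in \<open>auto simp: null_sets_def indicator_def\<close>)
    note sc = assms(3)[unfolded L2_sc_semigroup_def]
    have a2: "AE x in M. T t (indicator B) x = T t (\<lambda>_. 0) x"
      using sc[THEN conjunct2, THEN conjunct1, rule_format, OF t L2B L20 Bnull] .
    have "AE x in M. T t (\<lambda>y. 0 * (0::real) + 0 * 0) x = 0 * T t (\<lambda>_. 0) x + 0 * T t (\<lambda>_. 0) x"
      using sc[THEN conjunct2, THEN conjunct2, THEN conjunct1, rule_format, OF t L20 L20, of 0 0] by simp
    then have a3: "AE x in M. T t (\<lambda>_. 0) x = 0" by simp
    show ?thesis using a1 a2 a3 AE_space by eventually_elim (use ptfP t in auto)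
  qed
  have spL: "space ?L = {0..}" by (simp add: space_restrict_space)
  have mP: "(\<lambda>(t,x). P t x) \<in> borel_measurable (?L \<Otimes>\<^sub>M M)"
    unfolding P_def using meas[OF B(1)] .
  have mP': "(\<lambda>(x,t). P t x) \<in> borel_measurable (M \<Otimes>\<^sub>M ?L)"
    using measurable_pair_swap[OF mP] by simp
  have mP'': "(\<lambda>z. P (snd z) (fst z)) \<in> borel_measurable (M \<Otimes>\<^sub>M ?L)"
    using mP' by (simp add: case_prod_beta')
  have mf: "(\<lambda>(x,t). ennreal (exp (- t) * P t x)) \<in> borel_measurable (M \<Otimes>\<^sub>M ?L)"
  proof -
    have e: "(\<lambda>t::real. exp (- t)) \<in> borel_measurable ?L"
      by (intro measurable_restrict_space1) (simp add: measurable_lborel1)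
    have "(\<lambda>z. exp (- snd z) * P (snd z) (fst z)) \<in> borel_measurable (M \<Otimes>\<^sub>M ?L)"
      by (intro borel_measurable_times mP'' measurable_compose[OF measurable_snd e])
    then show ?thesis unfolding case_prod_beta' by (rule measurable_compose) simp
  qed
  define C where "C = {x \<in> space M. (\<integral>\<^sup>+t. ennreal (exp (- t) * P t x) \<partial>?L) \<noteq> 0}"
  have mI: "(\<lambda>x. \<integral>\<^sup>+t. ennreal (exp (- t) * P t x) \<partial>?L) \<in> borel_measurable M"
    using sigma_finite_measure.borel_measurable_nn_integral[OF sfL mf] .
  have CM: "C \<in> sets M" unfolding C_def using mI by measurable
  have psf: "pair_sigma_finite M ?L"
    using assms(1) sfL by (simp add: pair_sigma_finite_def)
  have "(\<integral>\<^sup>+t. \<integral>\<^sup>+x. ennreal (exp (- t) * P t x) \<partial>M \<partial>?L) = 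
        (\<integral>\<^sup>+x. \<integral>\<^sup>+t. ennreal (exp (- t) * P t x) \<partial>?L \<partial>M)"
    using pair_sigma_finite.Fubini'[OF psf mf] by simp
  moreover have "(\<integral>\<^sup>+t. \<integral>\<^sup>+x. ennreal (exp (- t) * P t x) \<partial>M \<partial>?L) = 0"
  proof -
    have "(\<integral>\<^sup>+x. ennreal (exp (- t) * P t x) \<partial>M) = 0" if "t \<in> space ?L" for t
    proof -
      have "(\<integral>\<^sup>+x. ennreal (exp (- t) * P t x) \<partial>M) = (\<integral>\<^sup>+x. 0 \<partial>M)"
        using S1[of t] that spL by (intro nn_integral_cong_AE) auto
      then show ?thesis by simp
    qed
    then have "(\<integral>\<^sup>+t. \<integral>\<^sup>+x. ennreal (exp (- t) * P t x) \<partial>M \<partial>?L) = (\<integral>\<^sup>+t. 0 \<partial>?L)"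
      by (intro nn_integral_cong) auto
    then show ?thesis by simp
  qed
  ultimately have "(\<integral>\<^sup>+x. \<integral>\<^sup>+t. ennreal (exp (- t) * P t x) \<partial>?L \<partial>M) = 0" by simp
  then have "AE x in M. (\<integral>\<^sup>+t. ennreal (exp (- t) * P t x) \<partial>?L) = 0"
    using nn_integral_0_iff_AE[OF mI] by simp
  then have C0: "emeasure M C = 0"
    using AE_iff_measurable[OF CM, of "\<lambda>x. (\<integral>\<^sup>+t. ennreal (exp (- t) * P t x) \<partial>?L) = 0"]
    unfolding C_def by auto
  have bndC: "bounded (range (indicator C :: 'a \<Rightarrow> real))"
    by (rule finite_imp_bounded) (rule finite_subset[of _ "{0,1}"], auto simp: indicator_def)
  have AEC: "AE x in M. indicator C x = (0::real)"
    by (rule AE_I'[of C]) (use CM C0 in \<open>auto simp: null_sets_def indicator_def\<close>)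
  have "\<forall>n::nat. \<exists>NN\<in>sets M. Cap NN = 0 \<and> (\<forall>x\<in>space M - NN. ptf p (1 / real (Suc n)) (indicator C) x = 0)"
  proof
    fix n :: nat
    show "\<exists>NN\<in>sets M. Cap NN = 0 \<and> (\<forall>x\<in>space M - NN. ptf p (1 / real (Suc n)) (indicator C) x = 0)"
      using assms(6)[rule_format, OF borel_measurable_indicator[OF CM] bndC AEC, of "1 / real (Suc n)"] by simp
  qed
  then obtain NN where NN: "\<And>n. NN n \<in> sets M" "\<And>n. Cap (NN n) = 0"
    "\<And>n x. x \<in> space M - NN n \<Longrightarrow> ptf p (1 / real (Suc n)) (indicator C) x = 0"
    by metis
  have key: "resolv p (indicator B) x = 0" if x: "x \<in> space M - (\<Union>n. NN n)" for x
  proof -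
    have xM: "x \<in> space M" using x by blast
    have sh: "AE t in lborel. t \<ge> 1 / real (Suc n) \<longrightarrow> P t x = 0" for n
    proof -
      define q where "q = 1 / real (Suc n)"
      have q: "q > 0" unfolding q_def by simp
      have pq: "prob_space (p q x)" "sets (p q x) = sets M" using tf1[of q x] q xM by auto
      have spq: "space (p q x) = space M" using sp[of q x] q xM by auto
      have "ptf p q (indicator C) x = 0" using NN(3)[of x n] x unfolding q_def by blast
      then have "measure (p q x) C = 0"
        unfolding ptf_def using CM sets.sets_into_space[OF CM]
        by (simp add: integral_indicator spq Int_absorb2)
      then have "emeasure (p q x) C = 0"
        using finite_measure.emeasure_eq_measure[OF prob_space.finite_measure[OF pq(1)]] by simp
      then have AEq: "AE y in p q x. y \<notin> C"
        by (intro AE_I'[of C]) (use CM pq(2) in \<open>auto simp: null_sets_def\<close>)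
      have psf2: "pair_sigma_finite (p q x) ?L"
        using prob_space_imp_sigma_finite[OF pq(1)] sfL by (simp add: pair_sigma_finite_def)
      have meq: "measurable (M \<Otimes>\<^sub>M ?L) borel = measurable (p q x \<Otimes>\<^sub>M ?L) borel"
        by (intro measurable_cong_sets sets_pair_measure_cong) (auto simp: pq)
      have mf2: "(\<lambda>(y,s). ennreal (exp (- s) * P s y)) \<in> borel_measurable (p q x \<Otimes>\<^sub>M ?L)"
        using mf unfolding meq .
      have pt: "ennreal (exp (- s) * P (q + s) x) = (\<integral>\<^sup>+y. ennreal (exp (- s) * P s y) \<partial>p q x)"
        if s: "s \<in> space ?L" for s
      proof -
        have s0: "s \<ge> 0" using s spL by auto
        have mPs: "P s \<in> borel_measurable M"
          using measurable_Pair1[OF mP', of s] s by simp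
        have meq2: "measurable M borel = measurable (p q x) borel"
          by (intro measurable_cong_sets) (auto simp: pq)
        have mPs': "(\<lambda>y. exp (- s) * P s y) \<in> borel_measurable (p q x)"
          using borel_measurable_times[OF borel_measurable_const mPs] unfolding meq2 .
        have bd: "AE y in p q x. norm (exp (- s) * P s y) \<le> exp (- s)"
        proof (rule AE_I2)
          fix y assume "y \<in> space (p q x)"
          then have yM: "y \<in> space M" using spq by simp
          have "P s y \<le> 1" unfolding P_def
            using prob_space.prob_le_1[of "p s y" B] tf1[OF s0 yM] by simp
          moreover have "P s y \<ge> 0" unfolding P_def by simp
          ultimately show "norm (exp (- s) * P s y) \<le> exp (- s)"
            by (simp add: abs_mult mult_left_le)
        qed
        have int: "integrable (p q x) (\<lambda>y. exp (- s) * P s y)"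
          using finite_measure.integrable_const_bound[OF prob_space.finite_measure[OF pq(1)] bd mPs'] .
        have "(\<integral>\<^sup>+y. ennreal (exp (- s) * P s y) \<partial>p q x) = ennreal (\<integral>y. exp (- s) * P s y \<partial>p q x)"
          by (rule nn_integral_eq_integral[OF int]) (simp add: P_def)
        also have "(\<integral>y. exp (- s) * P s y \<partial>p q x) = exp (- s) * (\<integral>y. P s y \<partial>p q x)"
          by simp
        also have "(\<integral>y. P s y \<partial>p q x) = P (q + s) x"
          unfolding P_def using CK[of q s x B] q s0 xM B(1) by simp
        finally show ?thesis by simp
      qed
      have "(\<integral>\<^sup>+s. ennreal (exp (- s) * P (q + s) x) \<partial>?L)
           = (\<integral>\<^sup>+s. \<integral>\<^sup>+y. ennreal (exp (- s) * P s y) \<partial>p q x \<partial>?L)"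
        by (intro nn_integral_cong pt)
      also have "\<dots> = (\<integral>\<^sup>+y. \<integral>\<^sup>+s. ennreal (exp (- s) * P s y) \<partial>?L \<partial>p q x)"
        using pair_sigma_finite.Fubini'[OF psf2 mf2] by simp
      also have "\<dots> = (\<integral>\<^sup>+y. 0 \<partial>p q x)"
      proof (rule nn_integral_cong_AE)
        show "AE y in p q x. (\<integral>\<^sup>+s. ennreal (exp (- s) * P s y) \<partial>?L) = 0"
          using AEq AE_space by eventually_elim (auto simp: C_def spq)
      qed
      finally have I0: "(\<integral>\<^sup>+s. ennreal (exp (- s) * P (q + s) x) \<partial>?L) = 0" by simp
      have shm: "(\<lambda>s. q + s) \<in> ?L \<rightarrow>\<^sub>M ?L"
      proof (rule measurable_restrict_space3)
        show "(\<lambda>s. q + s) \<in> lborel \<rightarrow>\<^sub>M lborel"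
          by (simp add: measurable_lborel1 measurable_lborel2)
        show "(\<lambda>s. q + s) \<in> {0..} \<rightarrow> {0..}" using q by (simp add: Pi_iff)
      qed
      have mxq: "(\<lambda>s. (x, q + s)) \<in> ?L \<rightarrow>\<^sub>M M \<Otimes>\<^sub>M ?L"
        using shm xM by (intro measurable_Pair measurable_const) auto
      have m1: "(\<lambda>s. P (q + s) x) \<in> borel_measurable ?L"
        using measurable_compose[OF mxq mP''] by simp
      have e: "(\<lambda>t::real. exp (- t)) \<in> borel_measurable ?L"
        by (intro measurable_restrict_space1) (simp add: measurable_lborel1)
      have mI2: "(\<lambda>s. ennreal (exp (- s) * P (q + s) x)) \<in> borel_measurable ?L"
        using m1 e by (intro measurable_compose[OF _ measurable_ennreal] borel_measurable_times)
      then have "AE s in ?L. ennreal (exp (- s) * P (q + s) x) = 0"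
        using nn_integral_0_iff_AE[OF mI2] I0 by simp
      then have "AE s in ?L. P (q + s) x = 0"
        by eventually_elim (auto simp: P_def ennreal_eq_0_iff mult_le_0_iff intro: antisym)
      then have "AE s in lborel. s \<in> {0..} \<longrightarrow> P (q + s) x = 0"
        by (subst (asm) AE_restrict_space_iff) auto
      then have "AE s in lborel. (q + s \<ge> q \<longrightarrow> P (q + s) x = 0)"
        by eventually_elim auto
      then show ?thesis unfolding q_def[symmetric] by (rule AE_shift)
    qed
    have "AE t in lborel. \<forall>n. t \<ge> 1 / real (Suc n) \<longrightarrow> P t x = 0"
      using sh by (subst AE_all_countable) blast
    then have "AE t in lborel. indicator {0..} t *\<^sub>R (exp (- t) * ptf p t (indicator B) x) = 0"
      using AE_lborel_singleton[of 0]
    proof eventually_elim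
      case (elim t)
      show ?case
      proof (cases "t > 0")
        case True
        then obtain n where "inverse (real (Suc n)) < t" using reals_Archimedean by blast
        then have "P t x = 0" using elim(1) by (auto simp: field_simps intro: less_imp_le)
        then show ?thesis using ptfP[of t x] True xM by simp
      next
        case False
        then show ?thesis using elim(2) by (simp add: indicator_def)
      qed
    qed
    then show ?thesis unfolding resolv_def set_lebesgue_integral_def by (rule integral_eq_zero_AE)
  qed
  have "N \<subseteq> (\<Union>n. NN n)" using Nsub key by force
  moreover have "Cap (\<Union>n. NN n) = 0" using assms(5) NN unfolding capacity_def by blast
  moreover have "(\<Union>n. NN n) \<in> sets M" using NN by blast
  ultimately have "Cap N \<le> 0" using assms(5) NM unfolding capacity_def by metis
  then show ?thesis by simp
qed

end
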